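(* Let $G$ be a $4$-connected simple graph on seven vertices. Then $G$ does not contain $W_6$ as a minor if and only if $G$ has no vertex of degree $6$.
   Context: $W_6$ is the wheel obtained by joining a single new vertex to all vertices of a cycle of length $6$. A minor is obtained by a sequence of edge deletions and edge contractions (parallel edges arising from contractions are reduced to single edges). *)

theory Defs
  imports Main
begin

definition simple_graph :: "'a set \<Rightarrow> 'a set set \<Rightarrow> bool" where
  "simple_graph V E \<longleftrightarrow> finite V \<and> (\<forall>e\<in>E. e \<subseteq> V \<and> card e = 2)"

definition degree :: "'a set set \<Rightarrow> 'a \<Rightarrow> nat" where
  "degree E v = card {e \<in> E. v \<in> e}"

definition graph_connected :: "'a set \<Rightarrow> 'a set set \<Rightarrow> bool" where
  "graph_connected V E \<longleftrightarrow>
     (\<forall>u\<in>V. \<forall>v\<in>V. (u, v) \<in> {(x, y). {x, y} \<in> E}\<^sup>*)"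

definition del_vertices :: "'a set \<Rightarrow> 'a set \<Rightarrow> 'a set set \<Rightarrow> 'a set \<times> 'a set set" where
  "del_vertices S V E = (V - S, {e \<in> E. e \<inter> S = {}})"

definition k_connected :: "nat \<Rightarrow> 'a set \<Rightarrow> 'a set set \<Rightarrow> bool" where
  "k_connected k V E \<longleftrightarrow> card V > k \<and>
     (\<forall>S \<subseteq> V. card S < k \<longrightarrow> graph_connected (V - S) {e \<in> E. e \<inter> S = {}})"

text \<open>One minor operation: deleting an edge, or contracting an edge {u,v}
  (v is merged into u; parallel edges collapse automatically since edges are sets).\<close>
inductive minor_step :: "'a set \<times> 'a set set \<Rightarrow> 'a set \<times> 'a set set \<Rightarrow> bool" where
  del_edge: "e \<in> E \<Longrightarrow> minor_step (V, E) (V, E - {e})"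
| contract: "{u, v} \<in> E \<Longrightarrow> u \<noteq> v \<Longrightarrow>
     minor_step (V, E) (V - {v}, (\<lambda>e. (\<lambda>x. if x = v then u else x) ` e) ` (E - {{u, v}}))"

definition graph_iso :: "'a set \<times> 'a set set \<Rightarrow> 'b set \<times> 'b set set \<Rightarrow> bool" where
  "graph_iso G H \<longleftrightarrow> (\<exists>f. bij_betw f (fst G) (fst H) \<and> (\<lambda>e. f ` e) ` snd G = snd H)"

definition is_minor :: "'b set \<times> 'b set set \<Rightarrow> 'a set \<times> 'a set set \<Rightarrow> bool" where
  "is_minor H G \<longleftrightarrow> (\<exists>G'. minor_step\<^sup>*\<^sup>* G G' \<and> graph_iso G' H)"

definition W6 :: "nat set \<times> nat set set" where
  "W6 = ({0..6}, {{i, (i + 1) mod 6} | i. i < 6} \<union> {{i, 6} | i. i < 6})"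

end

theory Submission imports Defs begin

lemma nonadj:
  assumes sg: "simple_graph V E" and kc: "k_connected 4 V E" and c7: "card V = 7"
    and xV: "x \<in> V" "a \<in> V" "b \<in> V" "c \<in> V"
    and d: "distinct [x,a,b,c]"
  shows "{x,a} \<in> E \<or> {x,b} \<in> E \<or> {x,c} \<in> E"
proof (rule ccontr)
  assume nn: "\<not> ({x,a} \<in> E \<or> {x,b} \<in> E \<or> {x,c} \<in> E)"
  define S where "S = V - {x,a,b,c}"
  have fin: "finite V" using sg by (simp add: simple_graph_def)
  have c4: "card {x,a,b,c} = 4" using d by simp
  have "card S = 3" unfolding S_def using c4 c7 xV fin
    by (subst card_Diff_subset) auto
  moreover have "S \<subseteq> V" by (auto simp: S_def)
  ultimately have "graph_connected (V - S) {e \<in> E. e \<inter> S = {}}"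
    using kc unfolding k_connected_def by auto
  moreover have VS: "V - S = {x,a,b,c}" using xV by (auto simp: S_def)
  ultimately have "(x, a) \<in> {(p, q). {p, q} \<in> {e \<in> E. e \<inter> S = {}}}\<^sup>*"
    unfolding graph_connected_def by auto
  then obtain q where q: "{x,q} \<in> E" "{x,q} \<inter> S = {}"
    using d by (cases rule: converse_rtranclE) auto
  have "{x,q} \<subseteq> V" "card {x,q} = 2" using q sg by (auto simp: simple_graph_def)
  hence "q \<in> V" "q \<noteq> x" by auto
  hence "q \<in> {a,b,c}" using q(2) by (auto simp: S_def)
  thus False using nn q(1) by auto
qed

lemma del_edges:
  assumes "finite D" "D \<inter> E' = {}"
  shows "minor_step\<^sup>*\<^sup>* (V, E' \<union> D) (V, E')"
  using assms
proof (induction D rule: finite_induct)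
  case empty thus ?case by simp
next
  case (insert y D)
  have "minor_step (V, E' \<union> insert y D) (V, (E' \<union> insert y D) - {y})"
    by (rule minor_step.del_edge) auto
  moreover have "(E' \<union> insert y D) - {y} = E' \<union> D" using insert by auto
  moreover have "minor_step\<^sup>*\<^sup>* (V, E' \<union> D) (V, E')" using insert by auto
  ultimately show ?case by (metis converse_rtranclp_into_rtranclp)
qed

lemma W6_edges:
  "snd W6 = {{0,1},{1,2},{2,3},{3,4},{4,5},{5,0},{0,6},{1,6},{2,6},{3,6},{4,6},{5,6}}"
proof -
  have e: "{..<6::nat} = {0,1,2,3,4,5}" by auto
  have "{{i, (i + 1) mod 6} | i::nat. i < 6} = (\<lambda>i. {i, (i + 1) mod 6}) ` {..<6}" by auto
  also have "\<dots> = {{0,1},{1,2},{2,3},{3,4},{4,5},{5,0}}" unfolding e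
    by (simp only: image_insert image_empty) (simp del: One_nat_def add_2_eq_Suc add_2_eq_Suc')
  finally have 1: "{{i, (i + 1) mod 6} | i::nat. i < 6} = {{0,1},{1,2},{2,3},{3,4},{4,5},{5,0}}" .
  have "{{i, 6} | i::nat. i < 6} = (\<lambda>i. {i, 6}) ` {..<6}" by auto
  also have "\<dots> = {{0,6},{1,6},{2,6},{3,6},{4,6},{5,6}}" unfolding e
    by (simp only: image_insert image_empty)
  finally have 2: "{{i, 6} | i::nat. i < 6} = {{0,6},{1,6},{2,6},{3,6},{4,6},{5,6}}" .
  show ?thesis unfolding W6_def snd_conv 1 2 by (simp only: Un_insert_left Un_empty_left)
qed

lemma wheel:
  assumes sg: "simple_graph V E"
    and d: "distinct [h,p0,p1,p2,p3,p4,p5]"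
    and V: "V = {h,p0,p1,p2,p3,p4,p5}"
    and cyc: "{p0,p1} \<in> E" "{p1,p2} \<in> E" "{p2,p3} \<in> E" "{p3,p4} \<in> E" "{p4,p5} \<in> E" "{p5,p0} \<in> E"
    and sp: "{p0,h} \<in> E" "{p1,h} \<in> E" "{p2,h} \<in> E" "{p3,h} \<in> E" "{p4,h} \<in> E" "{p5,h} \<in> E"
  shows "is_minor W6 (V, E)"
proof -
  define E' where "E' = {{p0,p1},{p1,p2},{p2,p3},{p3,p4},{p4,p5},{p5,p0},{p0,h},{p1,h},{p2,h},{p3,h},{p4,h},{p5,h}}"
  have sub: "E' \<subseteq> E" using cyc sp by (auto simp: E'_def)
  have finE: "finite E"
  proof -
    have "E \<subseteq> Pow V" using sg by (auto simp: simple_graph_def)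
    moreover have "finite V" using sg by (simp add: simple_graph_def)
    ultimately show ?thesis by (meson finite_Pow_iff finite_subset)
  qed
  have "minor_step\<^sup>*\<^sup>* (V, E' \<union> (E - E')) (V, E')"
    by (rule del_edges) (use finE in auto)
  moreover have "E' \<union> (E - E') = E" using sub by auto
  ultimately have steps: "minor_step\<^sup>*\<^sup>* (V, E) (V, E')" by simp
  define f where "f x = (if x = h then 6 else if x = p0 then 0 else if x = p1 then 1 else
     if x = p2 then 2 else if x = p3 then 3 else if x = p4 then 4 else (5::nat))" for x
  have fv: "f h = 6" "f p0 = 0" "f p1 = 1" "f p2 = 2" "f p3 = 3" "f p4 = 4" "f p5 = 5"
    using d by (auto simp: f_def)
  have "inj_on f V" unfolding V using d by (auto simp: inj_on_def fv)
  moreover have "f ` V = {0..6}"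
  proof -
    have "{0..6::nat} = {6,0,1,2,3,4,5}" by auto
    thus ?thesis unfolding V by (simp only: image_insert image_empty fv)
  qed
  ultimately have bij: "bij_betw f V {0..6}" by (simp add: bij_betw_def)
  have "(\<lambda>e. f ` e) ` E' = snd W6"
    unfolding W6_edges E'_def by (simp only: image_insert image_empty fv)
  moreover have "fst W6 = {0..6}" by (simp add: W6_def)
  ultimately have "graph_iso (V, E') W6" using bij unfolding graph_iso_def fst_conv snd_conv by metis
  thus ?thesis using steps by (auto simp: is_minor_def)
qed

lemma ham6:
  assumes "(x01 \<or> x02 \<or> x03) \<and> (x01 \<or> x02 \<or> x04) \<and> (x01 \<or> x02 \<or> x05) \<and> (x01 \<or> x03 \<or> x04) \<and> (x01 \<or> x03 \<or> x05) \<and> (x01 \<or> x04 \<or> x05) \<and> (x02 \<or> x03 \<or> x04) \<and> (x02 \<or> x03 \<or> x05) \<and> (x02 \<or> x04 \<or> x05) \<and> (x03 \<or> x04 \<or> x05) \<and> (x01 \<or> x12 \<or> x13) \<and> (x01 \<or> x12 \<or> x14) \<and> (x01 \<or> x12 \<or> x15) \<and> (x01 \<or> x13 \<or> x14) \<and> (x01 \<or> x13 \<or> x15) \<and> (x01 \<or> x14 \<or> x15) \<and> (x12 \<or> x13 \<or> x14) \<and> (x12 \<or> x13 \<or> x15) \<and> (x12 \<or> x14 \<or> x15) \<and> (x13 \<or> x14 \<or> x15) \<and> (x02 \<or> x12 \<or> x23) \<and> (x02 \<or> x12 \<or> x24) \<and> (x02 \<or> x12 \<or> x25) \<and> (x02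 \<or> x23 \<or> x24) \<and> (x02 \<or> x23 \<or> x25) \<and> (x02 \<or> x24 \<or> x25) \<and> (x12 \<or> x23 \<or> x24) \<and> (x12 \<or> x23 \<or> x25) \<and> (x12 \<or> x24 \<or> x25) \<and> (x23 \<or> x24 \<or> x25) \<and> (x03 \<or> x13 \<or> x23) \<and> (x03 \<or> x13 \<or> x34) \<and> (x03 \<or> x13 \<or> x35) \<and> (x03 \<or> x23 \<or> x34) \<and> (x03 \<or> x23 \<or> x35) \<and> (x03 \<or> x34 \<or> x35) \<and> (x13 \<or> x23 \<or> x34) \<and> (x13 \<or> x23 \<or> x35) \<and> (x13 \<or> x34 \<or> x35) \<and> (x23 \<or> x34 \<or> x35) \<and> (x04 \<or> x14 \<or> x24) \<and> (x04 \<or> x14 \<or> x34) \<and> (x04 \<or> x14 \<or> x45) \<and> (x04 \<or> x24 \<or> x34) \<and> (x04 \<or> x24 \<or> x45) \<and> (x04 \<or> x34 \<or> x45) \<and> (x14 \<or> x24 \<or> x34) \<and> (x14 \<or> x24 \<or> x45) \<and> (x14 \<or> x34 \<or> x45) \<and> (x24 \<or> x34 \<or> x45) \<and> (x05 \<or> x15 \<or> x25) \<and> (x05 \<or> x15 \<or> x35) \<and> (x05 \<or> x15 \<or> x45) \<and> (x05 \<or> x25 \<or> x35) \<and> (x05 \<or> x25 \<or> x45) \<and> (x05 \<or> x35 \<or> x45) \<and> (x15 \<or> x25 \<or> x35) \<and> (x15 \<or> x25 \<or> x45) \<and> (x15 \<or> x35 \<or> x45) \<and> (x25 \<or> x35 \<or>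 x45)"
  shows "(x01 \<and> x12 \<and> x23 \<and> x34 \<and> x45 \<and> x05) \<or> (x01 \<and> x12 \<and> x23 \<and> x35 \<and> x45 \<and> x04) \<or> (x01 \<and> x12 \<and> x24 \<and> x34 \<and> x35 \<and> x05) \<or> (x01 \<and> x12 \<and> x24 \<and> x45 \<and> x35 \<and> x03) \<or> (x01 \<and> x12 \<and> x25 \<and> x35 \<and> x34 \<and> x04) \<or> (x01 \<and> x12 \<and> x25 \<and> x45 \<and> x34 \<and> x03) \<or> (x01 \<and> x13 \<and> x23 \<and> x24 \<and> x45 \<and> x05) \<or> (x01 \<and> x13 \<and> x23 \<and> x25 \<and> x45 \<and> x04) \<or> (x01 \<and> x13 \<and> x34 \<and> x24 \<and> x25 \<and> x05) \<or> (x01 \<and> x13 \<and> x34 \<and> x45 \<and> x25 \<and> x02) \<or> (x01 \<and> x13 \<and> x35 \<and> x25 \<and> x24 \<and> x04) \<or> (x01 \<and> x13 \<and> x35 \<and> x45 \<and> x24 \<and> x02) \<or> (x01 \<and> x14 \<and> x24 \<and> x23 \<and> x35 \<and> x05) \<or> (x01 \<and> x14 \<and> x24 \<and> x25 \<and> x35 \<and> x03) \<or> (x01 \<and> x14 \<and> x34 \<and> x23 \<and> x25 \<and> x05) \<or> (x01 \<and> x14 \<and> x34 \<and> x35 \<and> x25 \<and> x02) \<or> (x01 \<and> x14 \<and> x45 \<and> x25 \<and> x23 \<and> x03) \<or> (x01 \<and> x14 \<and> x45 \<and> x35 \<and> x23 \<and> x02) \<or> (x01 \<and> x15 \<and> x25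 \<and> x23 \<and> x34 \<and> x04) \<or> (x01 \<and> x15 \<and> x25 \<and> x24 \<and> x34 \<and> x03) \<or> (x01 \<and> x15 \<and> x35 \<and> x23 \<and> x24 \<and> x04) \<or> (x01 \<and> x15 \<and> x35 \<and> x34 \<and> x24 \<and> x02) \<or> (x01 \<and> x15 \<and> x45 \<and> x24 \<and> x23 \<and> x03) \<or> (x01 \<and> x15 \<and> x45 \<and> x34 \<and> x23 \<and> x02) \<or> (x02 \<and> x12 \<and> x13 \<and> x34 \<and> x45 \<and> x05) \<or> (x02 \<and> x12 \<and> x13 \<and> x35 \<and> x45 \<and> x04) \<or> (x02 \<and> x12 \<and> x14 \<and> x34 \<and> x35 \<and> x05) \<or> (x02 \<and> x12 \<and> x14 \<and> x45 \<and> x35 \<and> x03) \<or> (x02 \<and> x12 \<and> x15 \<and> x35 \<and> x34 \<and> x04) \<or> (x02 \<and> x12 \<and> x15 \<and> x45 \<and> x34 \<and> x03) \<or> (x02 \<and> x23 \<and> x13 \<and> x14 \<and> x45 \<and> x05) \<or> (x02 \<and> x23 \<and> x13 \<and> x15 \<and> x45 \<and> x04) \<or> (x02 \<and> x23 \<and> x34 \<and> x14 \<and> x15 \<and> x05) \<or> (x02 \<and> x23 \<and> x35 \<and> x15 \<and> x14 \<and> x04) \<or> (x02 \<and> x24 \<and> x14 \<and> x13 \<and> x35 \<and> x05) \<or> (x02 \<and> x24 \<and> x14 \<and> x15 \<and> x35 \<and> x03) \<or> (x02 \<and> x24 \<and> x34 \<and> x13 \<and> x15 \<and> x05) \<or>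 (x02 \<and> x24 \<and> x45 \<and> x15 \<and> x13 \<and> x03) \<or> (x02 \<and> x25 \<and> x15 \<and> x13 \<and> x34 \<and> x04) \<or> (x02 \<and> x25 \<and> x15 \<and> x14 \<and> x34 \<and> x03) \<or> (x02 \<and> x25 \<and> x35 \<and> x13 \<and> x14 \<and> x04) \<or> (x02 \<and> x25 \<and> x45 \<and> x14 \<and> x13 \<and> x03) \<or> (x03 \<and> x13 \<and> x12 \<and> x24 \<and> x45 \<and> x05) \<or> (x03 \<and> x13 \<and> x12 \<and> x25 \<and> x45 \<and> x04) \<or> (x03 \<and> x13 \<and> x14 \<and> x24 \<and> x25 \<and> x05) \<or> (x03 \<and> x13 \<and> x15 \<and> x25 \<and> x24 \<and> x04) \<or> (x03 \<and> x23 \<and> x12 \<and> x14 \<and> x45 \<and> x05) \<or> (x03 \<and> x23 \<and> x12 \<and> x15 \<and> x45 \<and> x04) \<or> (x03 \<and> x23 \<and> x24 \<and> x14 \<and> x15 \<and> x05) \<or> (x03 \<and> x23 \<and> x25 \<and> x15 \<and> x14 \<and> x04) \<or> (x03 \<and> x34 \<and> x14 \<and> x12 \<and> x25 \<and> x05) \<or> (x03 \<and> x34 \<and> x24 \<and> x12 \<and> x15 \<and> x05) \<or> (x03 \<and> x35 \<and> x15 \<and> x12 \<and> x24 \<and> x04) \<or> (x03 \<and> x35 \<and> x25 \<and> x12 \<and> x14 \<and> x04) \<or> (x04 \<and> x14 \<and> x12 \<and> x23 \<and> x35 \<and> x05) \<or> (x04 \<and> x14 \<and> x13 \<and> x23 \<and>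 x25 \<and> x05) \<or> (x04 \<and> x24 \<and> x12 \<and> x13 \<and> x35 \<and> x05) \<or> (x04 \<and> x24 \<and> x23 \<and> x13 \<and> x15 \<and> x05) \<or> (x04 \<and> x34 \<and> x13 \<and> x12 \<and> x25 \<and> x05) \<or> (x04 \<and> x34 \<and> x23 \<and> x12 \<and> x15 \<and> x05)"
  using assms by sat


lemma minor_inv:
  assumes "minor_step\<^sup>*\<^sup>* G G'" "\<forall>e\<in>snd G. e \<subseteq> fst G"
  shows "fst G' \<subseteq> fst G \<and> (\<forall>e\<in>snd G'. e \<subseteq> fst G') \<and> (fst G' = fst G \<longrightarrow> snd G' \<subseteq> snd G)"
  using assms(1)
proof (induction rule: rtranclp_induct)
  case base thus ?case using assms(2) by auto
next
  case (step y z)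
  from step.hyps(2) show ?case
  proof cases
    case (del_edge e E V)
    thus ?thesis using step.IH by auto
  next
    case (contract u v E V)
    have uv: "u \<in> V" "v \<in> V" using contract step.IH by auto
    have "fst z \<subseteq> fst G" using contract step.IH by auto
    moreover have "\<forall>e\<in>snd z. e \<subseteq> fst z"
    proof
      fix e assume "e \<in> snd z"
      then obtain e0 where e0: "e0 \<in> E" "e = (\<lambda>x. if x = v then u else x) ` e0"
        using contract by auto
      have "e0 \<subseteq> V" using e0 step.IH contract by auto
      thus "e \<subseteq> fst z" using e0 contract uv by auto
    qed
    moreover have "fst z \<noteq> fst G" using contract step.IH uv by auto
    ultimately show ?thesis by blast
  qed
qed

theorem lemma4p4:
  fixes V :: "'a set" and E :: "'a set set"
  assumes "simple_graph V E" and "card V = 7" and "k_connected 4 V E"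
  shows "\<not> is_minor W6 (V, E) \<longleftrightarrow> (\<forall>v\<in>V. degree E v \<noteq> 6)"
proof -
  have sg: "simple_graph V E" and c7: "card V = 7" and kc: "k_connected 4 V E" using assms by auto
  have finV: "finite V" using sg by (simp add: simple_graph_def)
  have Esub: "\<forall>e\<in>E. e \<subseteq> V" using sg by (simp add: simple_graph_def)
  have nbr: "{e \<in> E. x \<in> e} \<subseteq> (\<lambda>w. {x,w}) ` (V - {x})" for x
  proof
    fix e assume "e \<in> {e \<in> E. x \<in> e}"
    hence "e \<in> E" "x \<in> e" by auto
    hence "e \<subseteq> V" "card e = 2" using sg by (auto simp: simple_graph_def)
    then obtain p q where "e = {p,q}" "p \<noteq> q" by (auto simp: card_2_iff)
    thus "e \<in> (\<lambda>w. {x,w}) ` (V - {x})" using \<open>x \<in> e\<close> \<open>e \<subseteq> V\<close> by auto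
  qed
  have degle: "degree E x \<le> 6" if "x \<in> V" for x
  proof -
    have "degree E x \<le> card ((\<lambda>w. {x,w}) ` (V - {x}))"
      unfolding degree_def by (rule card_mono) (use nbr finV in auto)
    also have "\<dots> \<le> card (V - {x})" by (rule card_image_le) (use finV in auto)
    also have "\<dots> = 6" using c7 that finV by simp
    finally show ?thesis .
  qed
  show ?thesis
  proof
    assume nm: "\<not> is_minor W6 (V, E)"
    show "\<forall>v\<in>V. degree E v \<noteq> 6"
    proof (intro ballI notI)
      fix h assume hV: "h \<in> V" and d6: "degree E h = 6"
      have "{e \<in> E. h \<in> e} = (\<lambda>w. {h,w}) ` (V - {h})"
      proof (rule card_seteq)
        show "finite ((\<lambda>w. {h,w}) ` (V - {h}))" using finV by auto
        show "{e \<in> E. h \<in> e} \<subseteq> (\<lambda>w. {h,w}) ` (V - {h})" by (rule nbr)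
        have "card ((\<lambda>w. {h,w}) ` (V - {h})) \<le> card (V - {h})" by (rule card_image_le) (use finV in auto)
        also have "\<dots> = 6" using c7 hV finV by simp
        finally show "card ((\<lambda>w. {h,w}) ` (V - {h})) \<le> card {e \<in> E. h \<in> e}"
          using d6 by (simp add: degree_def)
      qed
      hence hadj: "\<And>w. w \<in> V - {h} \<Longrightarrow> {w,h} \<in> E" by (auto simp: insert_commute)
      have "card (V - {h}) = Suc (Suc (Suc (Suc (Suc (Suc 0)))))" using c7 hV finV by simp
      then obtain v0 B0 where b0: "V - {h} = insert v0 B0" "v0 \<notin> B0" "card B0 = Suc (Suc (Suc (Suc (Suc 0))))"
        by (metis card_eq_SucD)
      then obtain v1 B1 where b1: "B0 = insert v1 B1" "v1 \<notin> B1" "card B1 = Suc (Suc (Suc (Suc 0)))"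
        by (metis card_eq_SucD)
      then obtain v2 B2 where b2: "B1 = insert v2 B2" "v2 \<notin> B2" "card B2 = Suc (Suc (Suc 0))"
        by (metis card_eq_SucD)
      then obtain v3 B3 where b3: "B2 = insert v3 B3" "v3 \<notin> B3" "card B3 = Suc (Suc 0)"
        by (metis card_eq_SucD)
      then obtain v4 B4 where b4: "B3 = insert v4 B4" "v4 \<notin> B4" "card B4 = Suc 0"
        by (metis card_eq_SucD)
      then obtain v5 where b5: "B4 = {v5}"
        by (metis card_1_singletonE One_nat_def)
      have Vh: "V - {h} = {v0,v1,v2,v3,v4,v5}" using b0 b1 b2 b3 b4 b5 by simp
      have dist: "distinct [v0,v1,v2,v3,v4,v5]" using b0 b1 b2 b3 b4 b5 by auto
      have hV': "h \<notin> {v0,v1,v2,v3,v4,v5}" using Vh by auto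
      have Vh': "V = {h,v0,v1,v2,v3,v4,v5}" using Vh hV by auto
      have hadj: "{v0,h} \<in> E" "{v1,h} \<in> E" "{v2,h} \<in> E" "{v3,h} \<in> E" "{v4,h} \<in> E" "{v5,h} \<in> E"
        using hadj Vh by auto
      have hV: "distinct [h,v0,v1,v2,v3,v4,v5]" using hV' dist by simp
      have "is_minor W6 (V, E)"
      proof -
        have dd: "v0 \<noteq> v1" "v1 \<noteq> v0" "v0 \<noteq> v2" "v2 \<noteq> v0" "v0 \<noteq> v3" "v3 \<noteq> v0" "v0 \<noteq> v4" "v4 \<noteq> v0" "v0 \<noteq> v5" "v5 \<noteq> v0" "v1 \<noteq> v2" "v2 \<noteq> v1" "v1 \<noteq> v3" "v3 \<noteq> v1" "v1 \<noteq> v4" "v4 \<noteq> v1" "v1 \<noteq> v5" "v5 \<noteq> v1" "v2 \<noteq> v3" "v3 \<noteq> v2" "v2 \<noteq> v4" "v4 \<noteq> v2" "v2 \<noteq> v5" "v5 \<noteq> v2" "v3 \<noteq> v4" "v4 \<noteq> v3" "v3 \<noteq> v5" "v5 \<noteq> v3" "v4 \<noteq> v5" "v5 \<noteq> v4" using dist by auto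
        have hd: "h \<noteq> v0" "v0 \<noteq> h" "h \<noteq> v1" "v1 \<noteq> h" "h \<noteq> v2" "v2 \<noteq> h" "h \<noteq> v3" "v3 \<noteq> h" "h \<noteq> v4" "v4 \<noteq> h" "h \<noteq> v5" "v5 \<noteq> h" using hV' by auto
        have vV: "v0 \<in> V" "v1 \<in> V" "v2 \<in> V" "v3 \<in> V" "v4 \<in> V" "v5 \<in> V" using Vh by auto
        have C0: "{v0,v1} \<in> E \<or> {v0,v2} \<in> E \<or> {v0,v3} \<in> E"
          using nonadj[OF sg kc c7, of v0 v1 v2 v3] vV dd by (simp add: insert_commute)
        have C1: "{v0,v1} \<in> E \<or> {v0,v2} \<in> E \<or> {v0,v4} \<in> E"
          using nonadj[OF sg kc c7, of v0 v1 v2 v4] vV dd by (simp add: insert_commute)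
        have C2: "{v0,v1} \<in> E \<or> {v0,v2} \<in> E \<or> {v0,v5} \<in> E"
          using nonadj[OF sg kc c7, of v0 v1 v2 v5] vV dd by (simp add: insert_commute)
        have C3: "{v0,v1} \<in> E \<or> {v0,v3} \<in> E \<or> {v0,v4} \<in> E"
          using nonadj[OF sg kc c7, of v0 v1 v3 v4] vV dd by (simp add: insert_commute)
        have C4: "{v0,v1} \<in> E \<or> {v0,v3} \<in> E \<or> {v0,v5} \<in> E"
          using nonadj[OF sg kc c7, of v0 v1 v3 v5] vV dd by (simp add: insert_commute)
        have C5: "{v0,v1} \<in> E \<or> {v0,v4} \<in> E \<or> {v0,v5} \<in> E"
          using nonadj[OF sg kc c7, of v0 v1 v4 v5] vV dd by (simp add: insert_commute)
        have C6: "{v0,v2} \<in> E \<or> {v0,v3} \<in> E \<or> {v0,v4} \<in> E"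
          using nonadj[OF sg kc c7, of v0 v2 v3 v4] vV dd by (simp add: insert_commute)
        have C7: "{v0,v2} \<in> E \<or> {v0,v3} \<in> E \<or> {v0,v5} \<in> E"
          using nonadj[OF sg kc c7, of v0 v2 v3 v5] vV dd by (simp add: insert_commute)
        have C8: "{v0,v2} \<in> E \<or> {v0,v4} \<in> E \<or> {v0,v5} \<in> E"
          using nonadj[OF sg kc c7, of v0 v2 v4 v5] vV dd by (simp add: insert_commute)
        have C9: "{v0,v3} \<in> E \<or> {v0,v4} \<in> E \<or> {v0,v5} \<in> E"
          using nonadj[OF sg kc c7, of v0 v3 v4 v5] vV dd by (simp add: insert_commute)
        have C10: "{v0,v1} \<in> E \<or> {v1,v2} \<in> E \<or> {v1,v3} \<in> E"
          using nonadj[OF sg kc c7, of v1 v0 v2 v3] vV dd by (simp add: insert_commute)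
        have C11: "{v0,v1} \<in> E \<or> {v1,v2} \<in> E \<or> {v1,v4} \<in> E"
          using nonadj[OF sg kc c7, of v1 v0 v2 v4] vV dd by (simp add: insert_commute)
        have C12: "{v0,v1} \<in> E \<or> {v1,v2} \<in> E \<or> {v1,v5} \<in> E"
          using nonadj[OF sg kc c7, of v1 v0 v2 v5] vV dd by (simp add: insert_commute)
        have C13: "{v0,v1} \<in> E \<or> {v1,v3} \<in> E \<or> {v1,v4} \<in> E"
          using nonadj[OF sg kc c7, of v1 v0 v3 v4] vV dd by (simp add: insert_commute)
        have C14: "{v0,v1} \<in> E \<or> {v1,v3} \<in> E \<or> {v1,v5} \<in> E"
          using nonadj[OF sg kc c7, of v1 v0 v3 v5] vV dd by (simp add: insert_commute)
        have C15: "{v0,v1} \<in> E \<or> {v1,v4} \<in> E \<or> {v1,v5} \<in> E"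
          using nonadj[OF sg kc c7, of v1 v0 v4 v5] vV dd by (simp add: insert_commute)
        have C16: "{v1,v2} \<in> E \<or> {v1,v3} \<in> E \<or> {v1,v4} \<in> E"
          using nonadj[OF sg kc c7, of v1 v2 v3 v4] vV dd by (simp add: insert_commute)
        have C17: "{v1,v2} \<in> E \<or> {v1,v3} \<in> E \<or> {v1,v5} \<in> E"
          using nonadj[OF sg kc c7, of v1 v2 v3 v5] vV dd by (simp add: insert_commute)
        have C18: "{v1,v2} \<in> E \<or> {v1,v4} \<in> E \<or> {v1,v5} \<in> E"
          using nonadj[OF sg kc c7, of v1 v2 v4 v5] vV dd by (simp add: insert_commute)
        have C19: "{v1,v3} \<in> E \<or> {v1,v4} \<in> E \<or> {v1,v5} \<in> E"
          using nonadj[OF sg kc c7, of v1 v3 v4 v5] vV dd by (simp add: insert_commute)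
        have C20: "{v0,v2} \<in> E \<or> {v1,v2} \<in> E \<or> {v2,v3} \<in> E"
          using nonadj[OF sg kc c7, of v2 v0 v1 v3] vV dd by (simp add: insert_commute)
        have C21: "{v0,v2} \<in> E \<or> {v1,v2} \<in> E \<or> {v2,v4} \<in> E"
          using nonadj[OF sg kc c7, of v2 v0 v1 v4] vV dd by (simp add: insert_commute)
        have C22: "{v0,v2} \<in> E \<or> {v1,v2} \<in> E \<or> {v2,v5} \<in> E"
          using nonadj[OF sg kc c7, of v2 v0 v1 v5] vV dd by (simp add: insert_commute)
        have C23: "{v0,v2} \<in> E \<or> {v2,v3} \<in> E \<or> {v2,v4} \<in> E"
          using nonadj[OF sg kc c7, of v2 v0 v3 v4] vV dd by (simp add: insert_commute)
        have C24: "{v0,v2} \<in> E \<or> {v2,v3} \<in> E \<or> {v2,v5} \<in> E"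
          using nonadj[OF sg kc c7, of v2 v0 v3 v5] vV dd by (simp add: insert_commute)
        have C25: "{v0,v2} \<in> E \<or> {v2,v4} \<in> E \<or> {v2,v5} \<in> E"
          using nonadj[OF sg kc c7, of v2 v0 v4 v5] vV dd by (simp add: insert_commute)
        have C26: "{v1,v2} \<in> E \<or> {v2,v3} \<in> E \<or> {v2,v4} \<in> E"
          using nonadj[OF sg kc c7, of v2 v1 v3 v4] vV dd by (simp add: insert_commute)
        have C27: "{v1,v2} \<in> E \<or> {v2,v3} \<in> E \<or> {v2,v5} \<in> E"
          using nonadj[OF sg kc c7, of v2 v1 v3 v5] vV dd by (simp add: insert_commute)
        have C28: "{v1,v2} \<in> E \<or> {v2,v4} \<in> E \<or> {v2,v5} \<in> E"
          using nonadj[OF sg kc c7, of v2 v1 v4 v5] vV dd by (simp add: insert_commute)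
        have C29: "{v2,v3} \<in> E \<or> {v2,v4} \<in> E \<or> {v2,v5} \<in> E"
          using nonadj[OF sg kc c7, of v2 v3 v4 v5] vV dd by (simp add: insert_commute)
        have C30: "{v0,v3} \<in> E \<or> {v1,v3} \<in> E \<or> {v2,v3} \<in> E"
          using nonadj[OF sg kc c7, of v3 v0 v1 v2] vV dd by (simp add: insert_commute)
        have C31: "{v0,v3} \<in> E \<or> {v1,v3} \<in> E \<or> {v3,v4} \<in> E"
          using nonadj[OF sg kc c7, of v3 v0 v1 v4] vV dd by (simp add: insert_commute)
        have C32: "{v0,v3} \<in> E \<or> {v1,v3} \<in> E \<or> {v3,v5} \<in> E"
          using nonadj[OF sg kc c7, of v3 v0 v1 v5] vV dd by (simp add: insert_commute)
        have C33: "{v0,v3} \<in> E \<or> {v2,v3} \<in> E \<or> {v3,v4} \<in> E"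
          using nonadj[OF sg kc c7, of v3 v0 v2 v4] vV dd by (simp add: insert_commute)
        have C34: "{v0,v3} \<in> E \<or> {v2,v3} \<in> E \<or> {v3,v5} \<in> E"
          using nonadj[OF sg kc c7, of v3 v0 v2 v5] vV dd by (simp add: insert_commute)
        have C35: "{v0,v3} \<in> E \<or> {v3,v4} \<in> E \<or> {v3,v5} \<in> E"
          using nonadj[OF sg kc c7, of v3 v0 v4 v5] vV dd by (simp add: insert_commute)
        have C36: "{v1,v3} \<in> E \<or> {v2,v3} \<in> E \<or> {v3,v4} \<in> E"
          using nonadj[OF sg kc c7, of v3 v1 v2 v4] vV dd by (simp add: insert_commute)
        have C37: "{v1,v3} \<in> E \<or> {v2,v3} \<in> E \<or> {v3,v5} \<in> E"
          using nonadj[OF sg kc c7, of v3 v1 v2 v5] vV dd by (simp add: insert_commute)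
        have C38: "{v1,v3} \<in> E \<or> {v3,v4} \<in> E \<or> {v3,v5} \<in> E"
          using nonadj[OF sg kc c7, of v3 v1 v4 v5] vV dd by (simp add: insert_commute)
        have C39: "{v2,v3} \<in> E \<or> {v3,v4} \<in> E \<or> {v3,v5} \<in> E"
          using nonadj[OF sg kc c7, of v3 v2 v4 v5] vV dd by (simp add: insert_commute)
        have C40: "{v0,v4} \<in> E \<or> {v1,v4} \<in> E \<or> {v2,v4} \<in> E"
          using nonadj[OF sg kc c7, of v4 v0 v1 v2] vV dd by (simp add: insert_commute)
        have C41: "{v0,v4} \<in> E \<or> {v1,v4} \<in> E \<or> {v3,v4} \<in> E"
          using nonadj[OF sg kc c7, of v4 v0 v1 v3] vV dd by (simp add: insert_commute)
        have C42: "{v0,v4} \<in> E \<or> {v1,v4} \<in> E \<or> {v4,v5} \<in> E"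
          using nonadj[OF sg kc c7, of v4 v0 v1 v5] vV dd by (simp add: insert_commute)
        have C43: "{v0,v4} \<in> E \<or> {v2,v4} \<in> E \<or> {v3,v4} \<in> E"
          using nonadj[OF sg kc c7, of v4 v0 v2 v3] vV dd by (simp add: insert_commute)
        have C44: "{v0,v4} \<in> E \<or> {v2,v4} \<in> E \<or> {v4,v5} \<in> E"
          using nonadj[OF sg kc c7, of v4 v0 v2 v5] vV dd by (simp add: insert_commute)
        have C45: "{v0,v4} \<in> E \<or> {v3,v4} \<in> E \<or> {v4,v5} \<in> E"
          using nonadj[OF sg kc c7, of v4 v0 v3 v5] vV dd by (simp add: insert_commute)
        have C46: "{v1,v4} \<in> E \<or> {v2,v4} \<in> E \<or> {v3,v4} \<in> E"
          using nonadj[OF sg kc c7, of v4 v1 v2 v3] vV dd by (simp add: insert_commute)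
        have C47: "{v1,v4} \<in> E \<or> {v2,v4} \<in> E \<or> {v4,v5} \<in> E"
          using nonadj[OF sg kc c7, of v4 v1 v2 v5] vV dd by (simp add: insert_commute)
        have C48: "{v1,v4} \<in> E \<or> {v3,v4} \<in> E \<or> {v4,v5} \<in> E"
          using nonadj[OF sg kc c7, of v4 v1 v3 v5] vV dd by (simp add: insert_commute)
        have C49: "{v2,v4} \<in> E \<or> {v3,v4} \<in> E \<or> {v4,v5} \<in> E"
          using nonadj[OF sg kc c7, of v4 v2 v3 v5] vV dd by (simp add: insert_commute)
        have C50: "{v0,v5} \<in> E \<or> {v1,v5} \<in> E \<or> {v2,v5} \<in> E"
          using nonadj[OF sg kc c7, of v5 v0 v1 v2] vV dd by (simp add: insert_commute)
        have C51: "{v0,v5} \<in> E \<or> {v1,v5} \<in> E \<or> {v3,v5} \<in> E"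
          using nonadj[OF sg kc c7, of v5 v0 v1 v3] vV dd by (simp add: insert_commute)
        have C52: "{v0,v5} \<in> E \<or> {v1,v5} \<in> E \<or> {v4,v5} \<in> E"
          using nonadj[OF sg kc c7, of v5 v0 v1 v4] vV dd by (simp add: insert_commute)
        have C53: "{v0,v5} \<in> E \<or> {v2,v5} \<in> E \<or> {v3,v5} \<in> E"
          using nonadj[OF sg kc c7, of v5 v0 v2 v3] vV dd by (simp add: insert_commute)
        have C54: "{v0,v5} \<in> E \<or> {v2,v5} \<in> E \<or> {v4,v5} \<in> E"
          using nonadj[OF sg kc c7, of v5 v0 v2 v4] vV dd by (simp add: insert_commute)
        have C55: "{v0,v5} \<in> E \<or> {v3,v5} \<in> E \<or> {v4,v5} \<in> E"
          using nonadj[OF sg kc c7, of v5 v0 v3 v4] vV dd by (simp add: insert_commute)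
        have C56: "{v1,v5} \<in> E \<or> {v2,v5} \<in> E \<or> {v3,v5} \<in> E"
          using nonadj[OF sg kc c7, of v5 v1 v2 v3] vV dd by (simp add: insert_commute)
        have C57: "{v1,v5} \<in> E \<or> {v2,v5} \<in> E \<or> {v4,v5} \<in> E"
          using nonadj[OF sg kc c7, of v5 v1 v2 v4] vV dd by (simp add: insert_commute)
        have C58: "{v1,v5} \<in> E \<or> {v3,v5} \<in> E \<or> {v4,v5} \<in> E"
          using nonadj[OF sg kc c7, of v5 v1 v3 v4] vV dd by (simp add: insert_commute)
        have C59: "{v2,v5} \<in> E \<or> {v3,v5} \<in> E \<or> {v4,v5} \<in> E"
          using nonadj[OF sg kc c7, of v5 v2 v3 v4] vV dd by (simp add: insert_commute)
        have P: "({v0,v1} \<in> E \<or> {v0,v2} \<in> E \<or> {v0,v3} \<in> E) \<and> ({v0,v1} \<in> E \<or> {v0,v2} \<in> E \<or> {v0,v4} \<in> E) \<and> ({v0,v1} \<in> E \<or> {v0,v2} \<in> E \<or> {v0,v5} \<in> E) \<and> ({v0,v1} \<in> E \<or> {v0,v3} \<in> E \<or> {v0,v4} \<in> E) \<and> ({v0,v1} \<in> E \<or> {v0,v3} \<in> E \<or> {v0,v5} \<in> E) \<and> ({v0,v1} \<in> E \<or> {v0,v4} \<in> E \<or> {v0,v5} \<in> E) \<and> ({v0,v2} \<in> E \<or> {v0,v3} \<in> E \<or> {v0,v4} \<in> E) \<and> ({v0,v2} \<in> E \<or> {v0,v3} \<in> E \<or> {v0,v5} \<in> E) \<and> ({v0,v2}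 \<in> E \<or> {v0,v4} \<in> E \<or> {v0,v5} \<in> E) \<and> ({v0,v3} \<in> E \<or> {v0,v4} \<in> E \<or> {v0,v5} \<in> E) \<and> ({v0,v1} \<in> E \<or> {v1,v2} \<in> E \<or> {v1,v3} \<in> E) \<and> ({v0,v1} \<in> E \<or> {v1,v2} \<in> E \<or> {v1,v4} \<in> E) \<and> ({v0,v1} \<in> E \<or> {v1,v2} \<in> E \<or> {v1,v5} \<in> E) \<and> ({v0,v1} \<in> E \<or> {v1,v3} \<in> E \<or> {v1,v4} \<in> E) \<and> ({v0,v1} \<in> E \<or> {v1,v3} \<in> E \<or> {v1,v5} \<in> E) \<and> ({v0,v1} \<in> E \<or> {v1,v4} \<in> E \<or> {v1,v5} \<in> E) \<and> ({v1,v2} \<in> E \<or> {v1,v3} \<in> E \<or> {v1,v4} \<in> E) \<and> ({v1,v2} \<in> E \<or> {v1,v3} \<in> E \<or> {v1,v5} \<in> E) \<and> ({v1,v2} \<in> E \<or> {v1,v4} \<in> E \<or> {v1,v5} \<in> E) \<and> ({v1,v3} \<in> E \<or> {v1,v4} \<in> E \<or> {v1,v5} \<in> E) \<and> ({v0,v2} \<in> E \<or> {v1,v2} \<in> E \<or> {v2,v3} \<in> E) \<and> ({v0,v2} \<in> E \<or> {v1,v2} \<in> E \<or> {v2,v4} \<in> E) \<and> ({v0,v2} \<in> E \<or> {v1,v2} \<in> E \<or> {v2,v5} \<in> E) \<and> ({v0,v2} \<in> E \<or> {v2,v3} \<in> E \<or> {v2,v4} \<in> E) \<and> ({v0,v2}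 \<in> E \<or> {v2,v3} \<in> E \<or> {v2,v5} \<in> E) \<and> ({v0,v2} \<in> E \<or> {v2,v4} \<in> E \<or> {v2,v5} \<in> E) \<and> ({v1,v2} \<in> E \<or> {v2,v3} \<in> E \<or> {v2,v4} \<in> E) \<and> ({v1,v2} \<in> E \<or> {v2,v3} \<in> E \<or> {v2,v5} \<in> E) \<and> ({v1,v2} \<in> E \<or> {v2,v4} \<in> E \<or> {v2,v5} \<in> E) \<and> ({v2,v3} \<in> E \<or> {v2,v4} \<in> E \<or> {v2,v5} \<in> E) \<and> ({v0,v3} \<in> E \<or> {v1,v3} \<in> E \<or> {v2,v3} \<in> E) \<and> ({v0,v3} \<in> E \<or> {v1,v3} \<in> E \<or> {v3,v4} \<in> E) \<and> ({v0,v3} \<in> E \<or> {v1,v3} \<in> E \<or> {v3,v5} \<in> E) \<and> ({v0,v3} \<in> E \<or> {v2,v3} \<in> E \<or> {v3,v4} \<in> E) \<and> ({v0,v3} \<in> E \<or> {v2,v3} \<in> E \<or> {v3,v5} \<in> E) \<and> ({v0,v3} \<in> E \<or> {v3,v4} \<in> E \<or> {v3,v5} \<in> E) \<and> ({v1,v3} \<in> E \<or> {v2,v3} \<in> E \<or> {v3,v4} \<in> E) \<and> ({v1,v3} \<in> E \<or> {v2,v3} \<in> E \<or> {v3,v5} \<in> E) \<and> ({v1,v3} \<in> E \<or> {v3,v4} \<in> E \<or> {v3,v5} \<in> E) \<and> ({v2,v3} \<in> E \<or> {v3,v4} \<in> E \<or> {v3,v5} \<in> E) \<and> ({v0,v4}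 \<in> E \<or> {v1,v4} \<in> E \<or> {v2,v4} \<in> E) \<and> ({v0,v4} \<in> E \<or> {v1,v4} \<in> E \<or> {v3,v4} \<in> E) \<and> ({v0,v4} \<in> E \<or> {v1,v4} \<in> E \<or> {v4,v5} \<in> E) \<and> ({v0,v4} \<in> E \<or> {v2,v4} \<in> E \<or> {v3,v4} \<in> E) \<and> ({v0,v4} \<in> E \<or> {v2,v4} \<in> E \<or> {v4,v5} \<in> E) \<and> ({v0,v4} \<in> E \<or> {v3,v4} \<in> E \<or> {v4,v5} \<in> E) \<and> ({v1,v4} \<in> E \<or> {v2,v4} \<in> E \<or> {v3,v4} \<in> E) \<and> ({v1,v4} \<in> E \<or> {v2,v4} \<in> E \<or> {v4,v5} \<in> E) \<and> ({v1,v4} \<in> E \<or> {v3,v4} \<in> E \<or> {v4,v5} \<in> E) \<and> ({v2,v4} \<in> E \<or> {v3,v4} \<in> E \<or> {v4,v5} \<in> E) \<and> ({v0,v5} \<in> E \<or> {v1,v5} \<in> E \<or> {v2,v5} \<in> E) \<and> ({v0,v5} \<in> E \<or> {v1,v5} \<in> E \<or> {v3,v5} \<in> E) \<and> ({v0,v5} \<in> E \<or> {v1,v5} \<in> E \<or> {v4,v5} \<in> E) \<and> ({v0,v5} \<in> E \<or> {v2,v5} \<in> E \<or> {v3,v5} \<in> E) \<and> ({v0,v5} \<in> E \<or> {v2,v5} \<in> E \<or> {v4,v5} \<in> E) \<and> ({v0,v5} \<in> E \<or> {v3,v5} \<in> E \<or> {v4,v5} \<in> E) \<and> ({v1,v5}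 \<in> E \<or> {v2,v5} \<in> E \<or> {v3,v5} \<in> E) \<and> ({v1,v5} \<in> E \<or> {v2,v5} \<in> E \<or> {v4,v5} \<in> E) \<and> ({v1,v5} \<in> E \<or> {v3,v5} \<in> E \<or> {v4,v5} \<in> E) \<and> ({v2,v5} \<in> E \<or> {v3,v5} \<in> E \<or> {v4,v5} \<in> E)"
          using C0 C1 C2 C3 C4 C5 C6 C7 C8 C9 C10 C11 C12 C13 C14 C15 C16 C17 C18 C19 C20 C21 C22 C23 C24 C25 C26 C27 C28 C29 C30 C31 C32 C33 C34 C35 C36 C37 C38 C39 C40 C41 C42 C43 C44 C45 C46 C47 C48 C49 C50 C51 C52 C53 C54 C55 C56 C57 C58 C59 by blast
        from ham6[OF P] show ?thesis
          apply (elim disjE conjE)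
          subgoal by (rule wheel[OF sg, of h v0 v1 v2 v3 v4 v5]) (use dd hd Vh' hadj in \<open>simp_all add: insert_commute\<close>)
          subgoal by (rule wheel[OF sg, of h v0 v1 v2 v3 v5 v4]) (use dd hd Vh' hadj in \<open>simp_all add: insert_commute\<close>)
          subgoal by (rule wheel[OF sg, of h v0 v1 v2 v4 v3 v5]) (use dd hd Vh' hadj in \<open>simp_all add: insert_commute\<close>)
          subgoal by (rule wheel[OF sg, of h v0 v1 v2 v4 v5 v3]) (use dd hd Vh' hadj in \<open>simp_all add: insert_commute\<close>)
          subgoal by (rule wheel[OF sg, of h v0 v1 v2 v5 v3 v4]) (use dd hd Vh' hadj in \<open>simp_all add: insert_commute\<close>)
          subgoal by (rule wheel[OF sg, of h v0 v1 v2 v5 v4 v3]) (use dd hd Vh' hadj in \<open>simp_all add: insert_commute\<close>)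
          subgoal by (rule wheel[OF sg, of h v0 v1 v3 v2 v4 v5]) (use dd hd Vh' hadj in \<open>simp_all add: insert_commute\<close>)
          subgoal by (rule wheel[OF sg, of h v0 v1 v3 v2 v5 v4]) (use dd hd Vh' hadj in \<open>simp_all add: insert_commute\<close>)
          subgoal by (rule wheel[OF sg, of h v0 v1 v3 v4 v2 v5]) (use dd hd Vh' hadj in \<open>simp_all add: insert_commute\<close>)
          subgoal by (rule wheel[OF sg, of h v0 v1 v3 v4 v5 v2]) (use dd hd Vh' hadj in \<open>simp_all add: insert_commute\<close>)
          subgoal by (rule wheel[OF sg, of h v0 v1 v3 v5 v2 v4]) (use dd hd Vh' hadj in \<open>simp_all add: insert_commute\<close>)
          subgoal by (rule wheel[OF sg, of h v0 v1 v3 v5 v4 v2]) (use dd hd Vh' hadj in \<open>simp_all add: insert_commute\<close>)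
          subgoal by (rule wheel[OF sg, of h v0 v1 v4 v2 v3 v5]) (use dd hd Vh' hadj in \<open>simp_all add: insert_commute\<close>)
          subgoal by (rule wheel[OF sg, of h v0 v1 v4 v2 v5 v3]) (use dd hd Vh' hadj in \<open>simp_all add: insert_commute\<close>)
          subgoal by (rule wheel[OF sg, of h v0 v1 v4 v3 v2 v5]) (use dd hd Vh' hadj in \<open>simp_all add: insert_commute\<close>)
          subgoal by (rule wheel[OF sg, of h v0 v1 v4 v3 v5 v2]) (use dd hd Vh' hadj in \<open>simp_all add: insert_commute\<close>)
          subgoal by (rule wheel[OF sg, of h v0 v1 v4 v5 v2 v3]) (use dd hd Vh' hadj in \<open>simp_all add: insert_commute\<close>)
          subgoal by (rule wheel[OF sg, of h v0 v1 v4 v5 v3 v2]) (use dd hd Vh' hadj in \<open>simp_all add: insert_commute\<close>)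
          subgoal by (rule wheel[OF sg, of h v0 v1 v5 v2 v3 v4]) (use dd hd Vh' hadj in \<open>simp_all add: insert_commute\<close>)
          subgoal by (rule wheel[OF sg, of h v0 v1 v5 v2 v4 v3]) (use dd hd Vh' hadj in \<open>simp_all add: insert_commute\<close>)
          subgoal by (rule wheel[OF sg, of h v0 v1 v5 v3 v2 v4]) (use dd hd Vh' hadj in \<open>simp_all add: insert_commute\<close>)
          subgoal by (rule wheel[OF sg, of h v0 v1 v5 v3 v4 v2]) (use dd hd Vh' hadj in \<open>simp_all add: insert_commute\<close>)
          subgoal by (rule wheel[OF sg, of h v0 v1 v5 v4 v2 v3]) (use dd hd Vh' hadj in \<open>simp_all add: insert_commute\<close>)
          subgoal by (rule wheel[OF sg, of h v0 v1 v5 v4 v3 v2]) (use dd hd Vh' hadj in \<open>simp_all add: insert_commute\<close>)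
          subgoal by (rule wheel[OF sg, of h v0 v2 v1 v3 v4 v5]) (use dd hd Vh' hadj in \<open>simp_all add: insert_commute\<close>)
          subgoal by (rule wheel[OF sg, of h v0 v2 v1 v3 v5 v4]) (use dd hd Vh' hadj in \<open>simp_all add: insert_commute\<close>)
          subgoal by (rule wheel[OF sg, of h v0 v2 v1 v4 v3 v5]) (use dd hd Vh' hadj in \<open>simp_all add: insert_commute\<close>)
          subgoal by (rule wheel[OF sg, of h v0 v2 v1 v4 v5 v3]) (use dd hd Vh' hadj in \<open>simp_all add: insert_commute\<close>)
          subgoal by (rule wheel[OF sg, of h v0 v2 v1 v5 v3 v4]) (use dd hd Vh' hadj in \<open>simp_all add: insert_commute\<close>)
          subgoal by (rule wheel[OF sg, of h v0 v2 v1 v5 v4 v3]) (use dd hd Vh' hadj in \<open>simp_all add: insert_commute\<close>)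
          subgoal by (rule wheel[OF sg, of h v0 v2 v3 v1 v4 v5]) (use dd hd Vh' hadj in \<open>simp_all add: insert_commute\<close>)
          subgoal by (rule wheel[OF sg, of h v0 v2 v3 v1 v5 v4]) (use dd hd Vh' hadj in \<open>simp_all add: insert_commute\<close>)
          subgoal by (rule wheel[OF sg, of h v0 v2 v3 v4 v1 v5]) (use dd hd Vh' hadj in \<open>simp_all add: insert_commute\<close>)
          subgoal by (rule wheel[OF sg, of h v0 v2 v3 v5 v1 v4]) (use dd hd Vh' hadj in \<open>simp_all add: insert_commute\<close>)
          subgoal by (rule wheel[OF sg, of h v0 v2 v4 v1 v3 v5]) (use dd hd Vh' hadj in \<open>simp_all add: insert_commute\<close>)
          subgoal by (rule wheel[OF sg, of h v0 v2 v4 v1 v5 v3]) (use dd hd Vh' hadj in \<open>simp_all add: insert_commute\<close>)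
          subgoal by (rule wheel[OF sg, of h v0 v2 v4 v3 v1 v5]) (use dd hd Vh' hadj in \<open>simp_all add: insert_commute\<close>)
          subgoal by (rule wheel[OF sg, of h v0 v2 v4 v5 v1 v3]) (use dd hd Vh' hadj in \<open>simp_all add: insert_commute\<close>)
          subgoal by (rule wheel[OF sg, of h v0 v2 v5 v1 v3 v4]) (use dd hd Vh' hadj in \<open>simp_all add: insert_commute\<close>)
          subgoal by (rule wheel[OF sg, of h v0 v2 v5 v1 v4 v3]) (use dd hd Vh' hadj in \<open>simp_all add: insert_commute\<close>)
          subgoal by (rule wheel[OF sg, of h v0 v2 v5 v3 v1 v4]) (use dd hd Vh' hadj in \<open>simp_all add: insert_commute\<close>)
          subgoal by (rule wheel[OF sg, of h v0 v2 v5 v4 v1 v3]) (use dd hd Vh' hadj in \<open>simp_all add: insert_commute\<close>)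
          subgoal by (rule wheel[OF sg, of h v0 v3 v1 v2 v4 v5]) (use dd hd Vh' hadj in \<open>simp_all add: insert_commute\<close>)
          subgoal by (rule wheel[OF sg, of h v0 v3 v1 v2 v5 v4]) (use dd hd Vh' hadj in \<open>simp_all add: insert_commute\<close>)
          subgoal by (rule wheel[OF sg, of h v0 v3 v1 v4 v2 v5]) (use dd hd Vh' hadj in \<open>simp_all add: insert_commute\<close>)
          subgoal by (rule wheel[OF sg, of h v0 v3 v1 v5 v2 v4]) (use dd hd Vh' hadj in \<open>simp_all add: insert_commute\<close>)
          subgoal by (rule wheel[OF sg, of h v0 v3 v2 v1 v4 v5]) (use dd hd Vh' hadj in \<open>simp_all add: insert_commute\<close>)
          subgoal by (rule wheel[OF sg, of h v0 v3 v2 v1 v5 v4]) (use dd hd Vh' hadj in \<open>simp_all add: insert_commute\<close>)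
          subgoal by (rule wheel[OF sg, of h v0 v3 v2 v4 v1 v5]) (use dd hd Vh' hadj in \<open>simp_all add: insert_commute\<close>)
          subgoal by (rule wheel[OF sg, of h v0 v3 v2 v5 v1 v4]) (use dd hd Vh' hadj in \<open>simp_all add: insert_commute\<close>)
          subgoal by (rule wheel[OF sg, of h v0 v3 v4 v1 v2 v5]) (use dd hd Vh' hadj in \<open>simp_all add: insert_commute\<close>)
          subgoal by (rule wheel[OF sg, of h v0 v3 v4 v2 v1 v5]) (use dd hd Vh' hadj in \<open>simp_all add: insert_commute\<close>)
          subgoal by (rule wheel[OF sg, of h v0 v3 v5 v1 v2 v4]) (use dd hd Vh' hadj in \<open>simp_all add: insert_commute\<close>)
          subgoal by (rule wheel[OF sg, of h v0 v3 v5 v2 v1 v4]) (use dd hd Vh' hadj in \<open>simp_all add: insert_commute\<close>)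
          subgoal by (rule wheel[OF sg, of h v0 v4 v1 v2 v3 v5]) (use dd hd Vh' hadj in \<open>simp_all add: insert_commute\<close>)
          subgoal by (rule wheel[OF sg, of h v0 v4 v1 v3 v2 v5]) (use dd hd Vh' hadj in \<open>simp_all add: insert_commute\<close>)
          subgoal by (rule wheel[OF sg, of h v0 v4 v2 v1 v3 v5]) (use dd hd Vh' hadj in \<open>simp_all add: insert_commute\<close>)
          subgoal by (rule wheel[OF sg, of h v0 v4 v2 v3 v1 v5]) (use dd hd Vh' hadj in \<open>simp_all add: insert_commute\<close>)
          subgoal by (rule wheel[OF sg, of h v0 v4 v3 v1 v2 v5]) (use dd hd Vh' hadj in \<open>simp_all add: insert_commute\<close>)
          subgoal by (rule wheel[OF sg, of h v0 v4 v3 v2 v1 v5]) (use dd hd Vh' hadj in \<open>simp_all add: insert_commute\<close>)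
          done
      qed
      thus False using nm by simp
    qed
  next
    assume nd: "\<forall>v\<in>V. degree E v \<noteq> 6"
    show "\<not> is_minor W6 (V, E)"
    proof
      assume "is_minor W6 (V, E)"
      then obtain G' where st: "minor_step\<^sup>*\<^sup>* (V, E) G'" and iso: "graph_iso G' W6"
        by (auto simp: is_minor_def)
      obtain f where bij: "bij_betw f (fst G') {0..6}" and im: "(\<lambda>e. f ` e) ` snd G' = snd W6"
        using iso by (auto simp: graph_iso_def W6_def)
      have inv: "fst G' \<subseteq> V" "\<forall>e\<in>snd G'. e \<subseteq> fst G'" "fst G' = V \<longrightarrow> snd G' \<subseteq> E"
        using minor_inv[OF st] Esub by auto
      have "card (fst G') = 7" using bij_betw_same_card[OF bij] by simp
      hence V': "fst G' = V" using inv(1) c7 finV by (metis card_subset_eq)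
      hence sE: "snd G' \<subseteq> E" using inv(3) by simp
      have bij': "bij_betw f V {0..6}" using bij V' by simp
      define g where "g = inv_into V f"
      have injf: "inj_on f V" using bij' by (simp add: bij_betw_def)
      have bijg: "bij_betw g {0..6} V" unfolding g_def using bij' by (rule bij_betw_inv_into)
      have e6: "{g i, g 6} \<in> E" if "i < 6" for i
      proof -
        have "{i,6} \<in> snd W6" using that by (auto simp: W6_def)
        hence "{i,6} \<in> (\<lambda>e. f ` e) ` snd G'" using im by simp
        then obtain e where e: "e \<in> snd G'" "f ` e = {i,6}" by (rule imageE) simp
        have "e \<subseteq> V" using inv(2) e(1) V' by auto
        hence "g ` f ` e = e" unfolding g_def using injf by simp
        hence "e = {g i, g 6}" using e(2) by simp
        thus ?thesis using e(1) sE by auto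
      qed
      have g6: "g 6 \<in> V" using bijg by (auto simp: bij_betw_def)
      have injg: "inj_on g {0..6}" using bijg by (simp add: bij_betw_def)
      have "card ((\<lambda>i. {g i, g 6}) ` {0..<6}) = card {0..<(6::nat)}"
      proof (rule card_image)
        show "inj_on (\<lambda>i. {g i, g 6}) {0..<6}"
        proof
          fix i j assume ij: "i \<in> {0..<(6::nat)}" "j \<in> {0..<(6::nat)}" "{g i, g 6} = {g j, g 6}"
          have "g i \<noteq> g 6" "g j \<noteq> g 6" using ij injg by (auto dest: inj_onD)
          hence "g i = g j" using ij(3) by (auto simp: doubleton_eq_iff)
          thus "i = j" using ij injg by (auto dest: inj_onD)
        qed
      qed
      hence c6: "card ((\<lambda>i. {g i, g 6}) ` {0..<6}) = 6" by simp
      have "card ((\<lambda>i. {g i, g 6}) ` {0..<6}) \<le> degree E (g 6)"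
        unfolding degree_def
      proof (rule card_mono)
        show "finite {e \<in> E. g 6 \<in> e}"
          by (rule finite_subset[OF nbr]) (use finV in auto)
        show "(\<lambda>i. {g i, g 6}) ` {0..<6} \<subseteq> {e \<in> E. g 6 \<in> e}" using e6 by auto
      qed
      hence "degree E (g 6) = 6" using c6 degle[OF g6] by simp
      thus False using nd g6 by auto
    qed
  qed
qed

end
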